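(* Let $X$ be a Banach space which is a subspace of $\mathrm{Hol}(\mathbb{D})$ with continuous inclusion, such that: (i) $e_0\in X$; (ii) if $f,f_1\in\mathrm{Hol}(\mathbb{D})$ with $f=e_1f_1$, then $f\in X$ if and only if $f_1\in X$; (iii) if $f\in X$ then $z\mapsto f(\beta'z)$ belongs to $X$ for all $\beta'\in\mathbb{T}$. Let $m\in\mathrm{Hol}(\mathbb{D})$ with $mf\in X$ for all $f\in X$, let $\beta\in\mathbb{C}$ with $|\beta|=1$ and $\beta^n\neq1$ for all $n\in\mathbb{N}$, and let $T_X\in\mathcal{L}(X)$ be given by $(T_Xf)(z)=m(z)f(\beta z)$. Then (a) $m(0)\mathbb{T}\subset\sigma(T_X)$; (b) if $\lambda\in\sigma(T_X)$ then $\lambda\mathbb{T}\subset\sigma(T_X)$.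
   Context: $\mathbb{D}$ is the open unit disc, $\mathbb{T}$ the unit circle, $\mathrm{Hol}(\mathbb{D})$ the Fréchet space of holomorphic functions on $\mathbb{D}$ (topology of uniform convergence on compacta), $e_k(z)=z^k$. $\sigma(T_X)$ is the spectrum of the bounded operator $T_X$ on $X$; $c\mathbb{T}=\{c\mu:\mu\in\mathbb{T}\}$. *)

theory Defs
  imports "HOL-Analysis.Analysis"
begin

text \<open>Elements of Hol(D) are represented by their canonical representatives:
  functions holomorphic on the unit disc and equal to 0 outside it.\<close>
definition Hol_D :: "(complex \<Rightarrow> complex) set" where
  "Hol_D = {f. f holomorphic_on ball 0 1 \<and> (\<forall>z. z \<notin> ball 0 1 \<longrightarrow> f z = 0)}"

definition e0 :: "complex \<Rightarrow> complex" where
  "e0 = (\<lambda>z. if z \<in> ball 0 1 then 1 else 0)"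

definition banach_subspace_Hol :: "(complex \<Rightarrow> complex) set \<Rightarrow> ((complex \<Rightarrow> complex) \<Rightarrow> real) \<Rightarrow> bool" where
  "banach_subspace_Hol X N \<longleftrightarrow>
     X \<subseteq> Hol_D \<and>
     (\<lambda>z. 0) \<in> X \<and>
     (\<forall>f\<in>X. \<forall>g\<in>X. (\<lambda>z. f z + g z) \<in> X) \<and>
     (\<forall>f\<in>X. \<forall>c::complex. (\<lambda>z. c * f z) \<in> X) \<and>
     (\<forall>f\<in>X. N f \<ge> 0) \<and>
     (\<forall>f\<in>X. N f = 0 \<longleftrightarrow> f = (\<lambda>z. 0)) \<and>
     (\<forall>f\<in>X. \<forall>c::complex. N (\<lambda>z. c * f z) = cmod c * N f) \<and>
     (\<forall>f\<in>X. \<forall>g\<in>X. N (\<lambda>z. f z + g z) \<le> N f + N g) \<and>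
     (\<forall>s::nat \<Rightarrow> complex \<Rightarrow> complex. (\<forall>n. s n \<in> X) \<longrightarrow>
        (\<forall>e>0. \<exists>M. \<forall>p\<ge>M. \<forall>q\<ge>M. N (\<lambda>z. s p z - s q z) < e) \<longrightarrow>
        (\<exists>g\<in>X. (\<lambda>n. N (\<lambda>z. s n z - g z)) \<longlonglongrightarrow> 0)) \<and>
     (\<forall>K. compact K \<and> K \<subseteq> ball 0 1 \<longrightarrow>
        (\<exists>C. \<forall>f\<in>X. \<forall>z\<in>K. cmod (f z) \<le> C * N f))"

definition bounded_op :: "(complex \<Rightarrow> complex) set \<Rightarrow> ((complex \<Rightarrow> complex) \<Rightarrow> real)
     \<Rightarrow> ((complex \<Rightarrow> complex) \<Rightarrow> (complex \<Rightarrow> complex)) \<Rightarrow> bool" where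
  "bounded_op X N T \<longleftrightarrow>
     (\<forall>f\<in>X. T f \<in> X) \<and>
     (\<forall>f\<in>X. \<forall>g\<in>X. T (\<lambda>z. f z + g z) = (\<lambda>z. T f z + T g z)) \<and>
     (\<forall>f\<in>X. \<forall>c::complex. T (\<lambda>z. c * f z) = (\<lambda>z. c * T f z)) \<and>
     (\<exists>C. \<forall>f\<in>X. N (T f) \<le> C * N f)"

definition op_spectrum :: "(complex \<Rightarrow> complex) set \<Rightarrow> ((complex \<Rightarrow> complex) \<Rightarrow> real)
     \<Rightarrow> ((complex \<Rightarrow> complex) \<Rightarrow> (complex \<Rightarrow> complex)) \<Rightarrow> complex set" where
  "op_spectrum X N T = {l. \<not> (\<exists>S. bounded_op X N S \<and>
      (\<forall>f\<in>X. S (\<lambda>z. l * f z - T f z) = f) \<and>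
      (\<forall>f\<in>X. (\<lambda>z. l * S f z - T (S f) z) = f))}"

end

theory Submission
  imports Defs "HOL-Complex_Analysis.Complex_Analysis"
begin

definition gg :: "real \<Rightarrow> complex" where "gg t = exp (2 * pi * \<i> * of_real t)"

lemma gg_pow: "gg t ^ n = gg (real n * t)"
  unfolding gg_def by (simp add: exp_of_nat_mult[symmetric] algebra_simps)

lemma gg_int: "gg (of_int h) = 1"
proof -
  have "gg (of_int h) = exp ((2 * complex_of_int h * pi) * \<i>)"
    unfolding gg_def by (simp add: algebra_simps)
  also have "\<dots> = 1" using exp_integer_2pi[of "of_int h"] by simp
  finally show ?thesis .
qed

lemma gg_add: "gg (a + b) = gg a * gg b"
proof -
  have "2 * pi * \<i> * of_real (a + b) = 2 * pi * \<i> * of_real a + 2 * pi * \<i> * of_real b"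
    by (simp add: algebra_simps)
  then show ?thesis unfolding gg_def by (simp only: exp_add)
qed

lemma gg_shift: "gg (t - of_int h) = gg t"
proof -
  have "gg t = gg ((t - of_int h) + of_int h)" by simp
  also have "\<dots> = gg (t - of_int h) * gg (of_int h)" by (rule gg_add)
  also have "\<dots> = gg (t - of_int h)" by (simp only: gg_int mult_1_right)
  finally show ?thesis by simp
qed

lemma unit_gg: "cmod z = 1 \<Longrightarrow> z = gg (Arg z / (2 * pi))"
proof -
  assume z: "cmod z = 1"
  then have "z \<noteq> 0" by auto
  then have "z = of_real (cmod z) * exp (\<i> * of_real (Arg z))" by (rule Arg_eq)
  then show ?thesis using z unfolding gg_def by (simp add: field_simps)
qed

lemma gg_cont: "isCont gg t"
  unfolding gg_def by (intro continuous_intros)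

lemma orbit_dense:
  fixes \<beta> \<mu> :: complex
  assumes b1: "cmod \<beta> = 1" and b2: "\<forall>n::nat. n \<ge> 1 \<longrightarrow> \<beta> ^ n \<noteq> 1"
    and m1: "cmod \<mu> = 1" and e: "\<epsilon> > 0"
  shows "\<exists>n::nat. cmod (\<beta> ^ n - \<mu>) < \<epsilon>"
proof -
  define \<theta> where "\<theta> = Arg \<beta> / (2 * pi)"
  define \<alpha> where "\<alpha> = Arg \<mu> / (2 * pi)"
  have b: "\<beta> = gg \<theta>" using unit_gg[OF b1] by (simp add: \<theta>_def)
  have mu: "\<mu> = gg \<alpha>" using unit_gg[OF m1] by (simp add: \<alpha>_def)
  have irr: "\<theta> \<notin> \<rat>"
  proof
    assume "\<theta> \<in> \<rat>"
    then obtain a b where ab: "b > 0" "\<theta> = of_int a / of_int b" by (metis Rats_cases')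
    have "\<beta> ^ nat b = gg (real (nat b) * \<theta>)" using b gg_pow by simp
    also have "real (nat b) * \<theta> = of_int a" using ab by simp
    also have "gg (of_int a) = 1" by (rule gg_int)
    finally have "\<beta> ^ nat b = 1" .
    moreover have "nat b \<ge> 1" using ab by simp
    ultimately show False using b2 by blast
  qed
  obtain \<delta> where d: "\<delta> > 0" "\<And>t. norm (t - \<alpha>) < \<delta> \<Longrightarrow> norm (gg t - gg \<alpha>) < \<epsilon>"
  proof -
    have "gg \<midarrow>\<alpha>\<rightarrow> gg \<alpha>" using gg_cont by (simp add: isCont_def)
    from LIM_D[OF this e] obtain s where s: "s > 0" "\<forall>x. x \<noteq> \<alpha> \<and> norm (x - \<alpha>) < s \<longrightarrow> norm (gg x - gg \<alpha>) < \<epsilon>"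
      by blast
    show ?thesis
    proof (rule that[OF s(1)])
      fix t assume "norm (t - \<alpha>) < s"
      then show "norm (gg t - gg \<alpha>) < \<epsilon>" using s e by (cases "t = \<alpha>") auto
    qed
  qed
  obtain h k where hk: "k > 0" "\<bar>of_int k * \<theta> - of_int h - \<alpha>\<bar> < \<delta>"
    using sequence_of_fractional_parts_is_dense[OF irr d(1)] by metis
  have "\<beta> ^ nat k = gg (real (nat k) * \<theta>)" using b gg_pow by simp
  also have "\<dots> = gg (of_int k * \<theta> - of_int h)" using hk(1) gg_shift by simp
  finally have "cmod (\<beta> ^ nat k - \<mu>) < \<epsilon>" using d(2)[of "of_int k * \<theta> - of_int h"] hk(2) mu by simp
  then show ?thesis by blast
qed

locale bsp =
  fixes X :: "(complex \<Rightarrow> complex) set" and N :: "(complex \<Rightarrow> complex) \<Rightarrow> real"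
  assumes bX: "banach_subspace_Hol X N"
begin

lemma parts: "X \<subseteq> Hol_D \<and>
     (\<lambda>z. 0) \<in> X \<and>
     (\<forall>f\<in>X. \<forall>g\<in>X. (\<lambda>z. f z + g z) \<in> X) \<and>
     (\<forall>f\<in>X. \<forall>c::complex. (\<lambda>z. c * f z) \<in> X) \<and>
     (\<forall>f\<in>X. N f \<ge> 0) \<and>
     (\<forall>f\<in>X. N f = 0 \<longleftrightarrow> f = (\<lambda>z. 0)) \<and>
     (\<forall>f\<in>X. \<forall>c::complex. N (\<lambda>z. c * f z) = cmod c * N f) \<and>
     (\<forall>f\<in>X. \<forall>g\<in>X. N (\<lambda>z. f z + g z) \<le> N f + N g) \<and>
     (\<forall>s::nat \<Rightarrow> complex \<Rightarrow> complex. (\<forall>n. s n \<in> X) \<longrightarrow>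
        (\<forall>e>0. \<exists>M. \<forall>p\<ge>M. \<forall>q\<ge>M. N (\<lambda>z. s p z - s q z) < e) \<longrightarrow>
        (\<exists>g\<in>X. (\<lambda>n. N (\<lambda>z. s n z - g z)) \<longlonglongrightarrow> 0)) \<and>
     (\<forall>K. compact K \<and> K \<subseteq> ball 0 1 \<longrightarrow>
        (\<exists>C. \<forall>f\<in>X. \<forall>z\<in>K. cmod (f z) \<le> C * N f))"
  using bX unfolding banach_subspace_Hol_def by (rule HOL.meta_eq_to_obj_eq[THEN iffD1, rotated]) simp

lemma XD: "X \<subseteq> Hol_D" using parts by (rule conjunct1)
lemma zero_in[simp, intro]: "(\<lambda>z. 0) \<in> X" using parts by (elim conjE)
lemma add_in[intro]: "f \<in> X \<Longrightarrow> g \<in> X \<Longrightarrow> (\<lambda>z. f z + g z) \<in> X"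
  using parts by (elim conjE) (drule bspec, assumption, drule bspec, assumption)
lemma smult_in[intro]: "f \<in> X \<Longrightarrow> (\<lambda>z. c * f z) \<in> X"
  using parts by (elim conjE) (drule bspec, assumption, erule spec)
lemma N_nonneg[simp]: "f \<in> X \<Longrightarrow> N f \<ge> 0"
  using parts by (elim conjE) (drule bspec, assumption)
lemma N_eq_0: "f \<in> X \<Longrightarrow> N f = 0 \<longleftrightarrow> f = (\<lambda>z. 0)"
  using parts by (elim conjE) (drule bspec, assumption)
lemma N_smult: "f \<in> X \<Longrightarrow> N (\<lambda>z. c * f z) = cmod c * N f"
  using parts by (elim conjE) (drule bspec, assumption, erule spec)
lemma N_add: "f \<in> X \<Longrightarrow> g \<in> X \<Longrightarrow> N (\<lambda>z. f z + g z) \<le> N f + N g"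
  using parts by (elim conjE) (drule bspec, assumption, drule bspec, assumption)
lemma complete: "(\<And>n. s n \<in> X) \<Longrightarrow>
        (\<forall>e>0. \<exists>M. \<forall>p\<ge>M. \<forall>q\<ge>M. N (\<lambda>z. s p z - s q z) < e) \<Longrightarrow>
        (\<exists>g\<in>X. (\<lambda>n. N (\<lambda>z. s n z - g z)) \<longlonglongrightarrow> 0)"
  using parts by (elim conjE) (drule spec[where x=s], simp)
lemma evalbd: "compact K \<Longrightarrow> K \<subseteq> ball 0 1 \<Longrightarrow> (\<exists>C. \<forall>f\<in>X. \<forall>z\<in>K. cmod (f z) \<le> C * N f)"
  using parts by (elim conjE) (drule spec[where x=K], simp)

lemma neg_in[intro]: "f \<in> X \<Longrightarrow> (\<lambda>z. - f z) \<in> X"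
  using smult_in[of f "-1"] by simp

lemma diff_in[intro]: "f \<in> X \<Longrightarrow> g \<in> X \<Longrightarrow> (\<lambda>z. f z - g z) \<in> X"
  using add_in[of f "\<lambda>z. - g z"] neg_in[of g] by simp

lemma N_zero[simp]: "N (\<lambda>z. 0) = 0"
  using N_eq_0 by simp

lemma N_neg: "f \<in> X \<Longrightarrow> N (\<lambda>z. - f z) = N f"
  using N_smult[of f "-1"] by simp

lemma N_sym: "f \<in> X \<Longrightarrow> g \<in> X \<Longrightarrow> N (\<lambda>z. f z - g z) = N (\<lambda>z. g z - f z)"
  using N_neg[of "\<lambda>z. g z - f z"] by (simp add: diff_in)

lemma N_diff_tri: "f \<in> X \<Longrightarrow> g \<in> X \<Longrightarrow> h \<in> X \<Longrightarrow>
    N (\<lambda>z. f z - h z) \<le> N (\<lambda>z. f z - g z) + N (\<lambda>z. g z - h z)"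
  using N_add[of "\<lambda>z. f z - g z" "\<lambda>z. g z - h z"] by (simp add: diff_in)

lemma N_diff_le: "f \<in> X \<Longrightarrow> g \<in> X \<Longrightarrow> N (\<lambda>z. f z - g z) \<le> N f + N g"
  using N_add[of f "\<lambda>z. - g z"] N_neg[of g] by (simp add: neg_in)

lemma N_diff0: "f \<in> X \<Longrightarrow> g \<in> X \<Longrightarrow> N (\<lambda>z. f z - g z) = 0 \<Longrightarrow> f = g"
proof -
  assume a: "f \<in> X" "g \<in> X" "N (\<lambda>z. f z - g z) = 0"
  have "(\<lambda>z. f z - g z) = (\<lambda>z. 0)" using a N_eq_0 diff_in by blast
  then show "f = g" by (simp add: fun_eq_iff)
qed

lemma lim_unique:
  assumes "\<And>n. s n \<in> X" "a \<in> X" "b \<in> X"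
    "(\<lambda>n. N (\<lambda>z. s n z - a z)) \<longlonglongrightarrow> 0" "(\<lambda>n. N (\<lambda>z. s n z - b z)) \<longlonglongrightarrow> 0"
  shows "a = b"
proof -
  have le: "N (\<lambda>z. a z - b z) \<le> N (\<lambda>z. s n z - a z) + N (\<lambda>z. s n z - b z)" for n
    using N_diff_tri[of a "s n" b] N_sym[of a "s n"] assms by simp
  have "(\<lambda>n. N (\<lambda>z. s n z - a z) + N (\<lambda>z. s n z - b z)) \<longlonglongrightarrow> 0"
    using tendsto_add[OF assms(4,5)] by simp
  then have "N (\<lambda>z. a z - b z) \<le> 0"
    by (rule tendsto_lowerbound) (use le in \<open>auto intro: always_eventually\<close>)
  moreover have "N (\<lambda>z. a z - b z) \<ge> 0" using assms by (simp add: diff_in)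
  ultimately show ?thesis using N_diff0 assms by auto
qed

lemma geom_tele:
  assumes s: "\<And>n. s n \<in> X" and q: "0 \<le> q" "q < 1"
    and st: "\<And>n. N (\<lambda>z. s (Suc n) z - s n z) \<le> K * q ^ n"
  shows "n \<le> p \<Longrightarrow> N (\<lambda>z. s p z - s n z) \<le> K * (q ^ n - q ^ p) / (1 - q)"
proof (induction p rule: dec_induct)
  case base
  then show ?case by simp
next
  case (step p)
  have "N (\<lambda>z. s (Suc p) z - s n z) \<le> N (\<lambda>z. s (Suc p) z - s p z) + N (\<lambda>z. s p z - s n z)"
    using N_diff_tri s by blast
  also have "\<dots> \<le> K * q ^ p + K * (q ^ n - q ^ p) / (1 - q)"
    using st step by (intro add_mono) auto
  also have "\<dots> = K * (q ^ n - q ^ Suc p) / (1 - q)"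
    using q by (simp add: field_simps)
  finally show ?case .
qed

lemma geom_conv:
  assumes s: "\<And>n. s n \<in> X" and q: "0 \<le> q" "q < 1"
    and st: "\<And>n. N (\<lambda>z. s (Suc n) z - s n z) \<le> K * q ^ n"
  shows "\<exists>g\<in>X. (\<lambda>n. N (\<lambda>z. s n z - g z)) \<longlonglongrightarrow> 0"
proof (rule complete[OF s], intro allI impI)
  fix e :: real assume e: "e > 0"
  have "0 \<le> N (\<lambda>z. s (Suc 0) z - s 0 z)" using s by (simp add: diff_in)
  then have K: "K \<ge> 0" using st[of 0] by simp
  have lim: "(\<lambda>n. K * q ^ n / (1 - q)) \<longlonglongrightarrow> K * 0 / (1 - q)"
    using q by (intro tendsto_intros LIMSEQ_power_zero) auto
  obtain M where M: "\<And>n. n \<ge> M \<Longrightarrow> K * q ^ n / (1 - q) < e"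
    using LIMSEQ_D[OF lim[simplified] e] by (metis abs_less_iff diff_zero real_norm_def)
  show "\<exists>M. \<forall>p\<ge>M. \<forall>r\<ge>M. N (\<lambda>z. s p z - s r z) < e"
  proof (intro exI allI impI)
    fix p r assume pr: "M \<le> p" "M \<le> r"
    have gen: "N (\<lambda>z. s a z - s b z) < e" if "M \<le> b" "b \<le> a" for a b
    proof -
      have "N (\<lambda>z. s a z - s b z) \<le> K * (q ^ b - q ^ a) / (1 - q)"
        using geom_tele[OF s q st] that by blast
      also have "\<dots> \<le> K * q ^ b / (1 - q)"
        using q K by (intro divide_right_mono mult_left_mono) auto
      also have "\<dots> < e" using M[of b] that by simp
      finally show ?thesis .
    qed
    show "N (\<lambda>z. s p z - s r z) < e"
    proof (cases "r \<le> p")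
      case True then show ?thesis using gen pr by blast
    next
      case False
      then have "N (\<lambda>z. s r z - s p z) < e" using gen[of p r] pr by simp
      then show ?thesis using N_sym[of "s p" "s r"] s by simp
    qed
  qed
qed


definition lin :: "((complex \<Rightarrow> complex) \<Rightarrow> (complex \<Rightarrow> complex)) \<Rightarrow> bool" where
  "lin L \<longleftrightarrow> (\<forall>f\<in>X. L f \<in> X) \<and>
     (\<forall>f\<in>X. \<forall>g\<in>X. L (\<lambda>z. f z + g z) = (\<lambda>z. L f z + L g z)) \<and>
     (\<forall>f\<in>X. \<forall>c::complex. L (\<lambda>z. c * f z) = (\<lambda>z. c * L f z))"

lemma lin_in: "lin L \<Longrightarrow> f \<in> X \<Longrightarrow> L f \<in> X"
  unfolding lin_def by blast
lemma lin_add: "lin L \<Longrightarrow> f \<in> X \<Longrightarrow> g \<in> X \<Longrightarrow> L (\<lambda>z. f z + g z) = (\<lambda>z. L f z + L g z)"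
  unfolding lin_def by blast
lemma lin_smult: "lin L \<Longrightarrow> f \<in> X \<Longrightarrow> L (\<lambda>z. c * f z) = (\<lambda>z. c * L f z)"
  unfolding lin_def by blast
lemma lin_zero: "lin L \<Longrightarrow> L (\<lambda>z. 0) = (\<lambda>z. 0)"
  using lin_smult[of L "\<lambda>z. 0" 0] by simp
lemma lin_neg: "lin L \<Longrightarrow> f \<in> X \<Longrightarrow> L (\<lambda>z. - f z) = (\<lambda>z. - L f z)"
  using lin_smult[of L f "-1"] by simp
lemma lin_diff: "lin L \<Longrightarrow> f \<in> X \<Longrightarrow> g \<in> X \<Longrightarrow> L (\<lambda>z. f z - g z) = (\<lambda>z. L f z - L g z)"
  using lin_add[of L f "\<lambda>z. - g z"] lin_neg[of L g] neg_in[of g] by simp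

lemma N_of_real_smult: "f \<in> X \<Longrightarrow> t \<ge> 0 \<Longrightarrow> N (\<lambda>z. complex_of_real t * f z) = t * N f"
  using N_smult[of f "complex_of_real t"] by simp

theorem closed_graph:
  assumes L: "lin L"
    and cg: "\<And>s w. (\<And>n. s n \<in> X) \<Longrightarrow> w \<in> X \<Longrightarrow> (\<lambda>n. N (s n)) \<longlonglongrightarrow> 0 \<Longrightarrow>
              (\<lambda>n. N (\<lambda>z. L (s n) z - w z)) \<longlonglongrightarrow> 0 \<Longrightarrow> w = (\<lambda>z. 0)"
  shows "\<exists>C. \<forall>f\<in>X. N (L f) \<le> C * N f"
proof -
  define d where "d f g = (if f \<in> X \<and> g \<in> X then N (\<lambda>z. f z - g z) else 0)" for f g
  interpret M: Metric_space X d
  proof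
    show "0 \<le> d x y" for x y by (simp add: d_def diff_in)
    show "d x y = d y x" for x y using N_sym[of x y] by (auto simp: d_def)
    show "x \<in> X \<Longrightarrow> y \<in> X \<Longrightarrow> d x y = 0 \<longleftrightarrow> x = y" for x y
      using N_diff0[of x y] by (auto simp: d_def)
    show "x \<in> X \<Longrightarrow> y \<in> X \<Longrightarrow> z \<in> X \<Longrightarrow> d x z \<le> d x y + d y z" for x y z
      using N_diff_tri[of x y z] by (simp add: d_def)
  qed
  have mc: "M.mcomplete"
    unfolding M.mcomplete_def
  proof (intro allI impI)
    fix \<sigma> assume "M.MCauchy \<sigma>"
    then have s: "\<And>n. \<sigma> n \<in> X" and c: "\<forall>e>0. \<exists>M. \<forall>p\<ge>M. \<forall>q\<ge>M. d (\<sigma> p) (\<sigma> q) < e"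
      unfolding M.MCauchy_def by auto
    have "\<forall>e>0. \<exists>M. \<forall>p\<ge>M. \<forall>q\<ge>M. N (\<lambda>z. \<sigma> p z - \<sigma> q z) < e"
    proof -
      have dN: "d (\<sigma> p) (\<sigma> q) = N (\<lambda>z. \<sigma> p z - \<sigma> q z)" for p q
        using s[of p] s[of q] unfolding d_def by (simp only: if_True conj_absorb)
      show ?thesis using c by (simp only: dN)
    qed
    from complete[OF s this] obtain g where g: "g \<in> X" "(\<lambda>n. N (\<lambda>z. \<sigma> n z - g z)) \<longlonglongrightarrow> 0"
      by (elim bexE)
    show "\<exists>x. limitin M.mtopology \<sigma> x sequentially"
    proof (intro exI)
      show "limitin M.mtopology \<sigma> g sequentially"
        unfolding M.limitin_metric
      proof (intro conjI allI impI g(1))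
        fix e :: real assume e: "e > 0"
        from LIMSEQ_D[OF g(2) e] obtain n0 where n0: "\<forall>n\<ge>n0. norm (N (\<lambda>z. \<sigma> n z - g z) - 0) < e" by blast
        have "\<forall>n\<ge>n0. \<sigma> n \<in> X \<and> d (\<sigma> n) g < e" using n0 s g(1) by (auto simp: d_def abs_less_iff)
        then show "\<forall>\<^sub>F n in sequentially. \<sigma> n \<in> X \<and> d (\<sigma> n) g < e"
          unfolding eventually_sequentially by blast
      qed
    qed
  qed
  define A where "A n = {f \<in> X. N (L f) \<le> real n}" for n :: nat
  have AX: "A n \<subseteq> X" for n unfolding A_def by auto
  have "\<exists>n. M.mtopology interior_of (M.mtopology closure_of A n) \<noteq> {}"
  proof (rule ccontr)
    assume "\<not> ?thesis"
    then have e: "\<And>n. M.mtopology interior_of (M.mtopology closure_of A n) = {}" by blast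
    have "M.mtopology interior_of \<Union>(range (\<lambda>n. M.mtopology closure_of A n)) = {}"
      by (rule M.metric_Baire_category_alt[OF mc]) (auto simp: e)
    moreover have "\<Union>(range (\<lambda>n. M.mtopology closure_of A n)) = X"
    proof
      show "\<Union>(range (\<lambda>n. M.mtopology closure_of A n)) \<subseteq> X"
        using closure_of_subset_topspace[of M.mtopology] by auto
      show "X \<subseteq> \<Union>(range (\<lambda>n. M.mtopology closure_of A n))"
      proof
        fix f assume f: "f \<in> X"
        obtain n where "N (L f) \<le> real n" using real_arch_simple by blast
        then have "f \<in> A n" using f by (simp add: A_def)
        then have "f \<in> M.mtopology closure_of A n"
          using closure_of_subset[of "A n" M.mtopology] AX by auto
        then show "f \<in> \<Union>(range (\<lambda>n. M.mtopology closure_of A n))" by blast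
      qed
    qed
    ultimately show False
      using interior_of_topspace[of M.mtopology] by auto
  qed
  then obtain n f0 r where f0: "f0 \<in> X" and r: "r > 0"
    and ball: "M.mball f0 r \<subseteq> M.mtopology closure_of A n"
    unfolding M.metric_interior_of by blast
  have step4: "\<exists>u\<in>X. N (L u) \<le> 2 * real n \<and> N (\<lambda>z. v z - u z) < \<epsilon>"
    if v: "v \<in> X" "N v < r" and \<epsilon>: "\<epsilon> > 0" for v \<epsilon>
  proof -
    define w where "w = (\<lambda>z. f0 z + v z)"
    have w: "w \<in> X" using f0 v by (auto simp: w_def)
    have "(\<lambda>z. f0 z - w z) = (\<lambda>z. - v z)" by (simp add: w_def)
    then have "d f0 w < r" using v f0 w N_neg[of v] by (simp add: d_def)
    then have "w \<in> M.mtopology closure_of A n" using ball f0 w by auto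
    then have "\<forall>\<rho>>0. \<exists>y\<in>A n. y \<in> M.mball w \<rho>" unfolding M.metric_closure_of by blast
    then obtain a1 where a1: "a1 \<in> A n" "d w a1 < \<epsilon>/2"
      using \<epsilon> by (meson M.in_mball half_gt_zero)
    have "f0 \<in> M.mtopology closure_of A n" using ball f0 r by auto
    then have "\<forall>\<rho>>0. \<exists>y\<in>A n. y \<in> M.mball f0 \<rho>" unfolding M.metric_closure_of by blast
    then obtain a2 where a2: "a2 \<in> A n" "d f0 a2 < \<epsilon>/2"
      using \<epsilon> by (meson M.in_mball half_gt_zero)
    have a12: "a1 \<in> X" "a2 \<in> X" "N (L a1) \<le> real n" "N (L a2) \<le> real n"
      using a1 a2 by (auto simp: A_def)
    define u where "u = (\<lambda>z. a1 z - a2 z)"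
    have u: "u \<in> X" using a12 by (auto simp: u_def)
    have "N (L u) = N (\<lambda>z. L a1 z - L a2 z)" using lin_diff[OF L a12(1,2)] by (simp add: u_def)
    also have "\<dots> \<le> N (L a1) + N (L a2)" using N_diff_le lin_in[OF L] a12 by blast
    also have "\<dots> \<le> 2 * real n" using a12 by simp
    finally have 1: "N (L u) \<le> 2 * real n" .
    have "(\<lambda>z. v z - u z) = (\<lambda>z. (w z - a1 z) - (f0 z - a2 z))" by (auto simp: u_def w_def)
    then have "N (\<lambda>z. v z - u z) \<le> N (\<lambda>z. w z - a1 z) + N (\<lambda>z. f0 z - a2 z)"
      using N_diff_le[of "\<lambda>z. w z - a1 z" "\<lambda>z. f0 z - a2 z"] w f0 a12 by (simp add: diff_in)
    also have "\<dots> < \<epsilon>" using a1 a2 w f0 a12 by (simp add: d_def)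
    finally show ?thesis using 1 u by blast
  qed
  define K where "K = 4 * real n / r"
  have K0: "K \<ge> 0" using r by (simp add: K_def)
  have step5: "\<exists>u\<in>X. N (L u) \<le> K * N v \<and> N (\<lambda>z. v z - u z) < \<epsilon>"
    if v: "v \<in> X" and \<epsilon>: "\<epsilon> > 0" for v \<epsilon>
  proof (cases "N v = 0")
    case True
    then have "v = (\<lambda>z. 0)" using N_eq_0 v by blast
    then show ?thesis using \<epsilon> lin_zero[OF L] by (intro bexI[of _ "\<lambda>z. 0"]) auto
  next
    case False
    then have Nv: "N v > 0" using N_nonneg[OF v] by linarith
    define t where "t = r / (2 * N v)"
    have t: "t > 0" using r Nv by (simp add: t_def)
    define v' where "v' = (\<lambda>z. complex_of_real t * v z)"
    have v': "v' \<in> X" using v by (auto simp: v'_def)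
    have "N v' = t * N v" using N_of_real_smult[OF v, of t] t by (simp add: v'_def)
    also have "\<dots> = r / 2" using Nv by (simp add: t_def)
    finally have "N v' < r" using r by simp
    then obtain u' where u': "u' \<in> X" "N (L u') \<le> 2 * real n" "N (\<lambda>z. v' z - u' z) < t * \<epsilon>"
      using step4[OF v'] t \<epsilon> by (meson mult_pos_pos)
    define u where "u = (\<lambda>z. complex_of_real (1/t) * u' z)"
    have u: "u \<in> X" unfolding u_def by (rule smult_in[OF u'(1)])
    have "N (L u) = N (\<lambda>z. complex_of_real (1/t) * L u' z)"
      unfolding u_def by (simp only: lin_smult[OF L u'(1)])
    also have "\<dots> = (1/t) * N (L u')"
      by (rule N_of_real_smult[OF lin_in[OF L u'(1)]]) (use t in simp)
    also have "\<dots> \<le> (1/t) * (2 * real n)" using u' t by (intro mult_left_mono) auto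
    also have "\<dots> = K * N v" using Nv r by (simp add: t_def K_def field_simps)
    finally have 1: "N (L u) \<le> K * N v" .
    have "(\<lambda>z. v z - u z) = (\<lambda>z. complex_of_real (1/t) * (v' z - u' z))"
      using t by (auto simp: u_def v'_def field_simps)
    then have "N (\<lambda>z. v z - u z) = (1/t) * N (\<lambda>z. v' z - u' z)"
      using N_of_real_smult[of "\<lambda>z. v' z - u' z" "1/t"] v' u' t by (simp add: diff_in)
    also have "\<dots> < (1/t) * (t * \<epsilon>)" using u' t by (intro mult_strict_left_mono) auto
    also have "\<dots> = \<epsilon>" using t by simp
    finally show ?thesis using 1 u by blast
  qed
  define ch where "ch v \<epsilon> = (SOME u. u \<in> X \<and> N (L u) \<le> K * N v \<and> N (\<lambda>z. v z - u z) < \<epsilon>)" for v \<epsilon>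
  have ch: "ch v \<epsilon> \<in> X \<and> N (L (ch v \<epsilon>)) \<le> K * N v \<and> N (\<lambda>z. v z - ch v \<epsilon> z) < \<epsilon>"
    if "v \<in> X" "\<epsilon> > 0" for v \<epsilon>
  proof -
    have ex: "\<exists>u. u \<in> X \<and> N (L u) \<le> K * N v \<and> N (\<lambda>z. v z - u z) < \<epsilon>"
      using step5[OF that] by blast
    show ?thesis unfolding ch_def by (rule someI_ex[OF ex])
  qed
  show ?thesis
  proof (intro exI ballI)
    fix v assume v: "v \<in> X"
    show "N (L v) \<le> (2 * K) * N v"
    proof (cases "N v = 0")
      case True
      then have "v = (\<lambda>z. 0)" using N_eq_0 v by blast
      then show ?thesis using lin_zero[OF L] by simp
    next
      case False
      then have Nv: "N v > 0" using N_nonneg[OF v] by linarith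
      define vs where "vs = rec_nat v (\<lambda>k x. (\<lambda>z. x z - ch x (N v / 2 ^ Suc k) z))"
      have vs0: "vs 0 = v" by (simp add: vs_def)
      have vsS: "vs (Suc k) = (\<lambda>z. vs k z - ch (vs k) (N v / 2 ^ Suc k) z)" for k
        by (simp add: vs_def)
      have vsX: "vs k \<in> X \<and> N (vs k) \<le> N v / 2 ^ k" for k
      proof (induction k)
        case 0 then show ?case using v vs0 by simp
      next
        case (Suc k)
        have "ch (vs k) (N v / 2 ^ Suc k) \<in> X \<and> N (\<lambda>z. vs k z - ch (vs k) (N v / 2 ^ Suc k) z) < N v / 2 ^ Suc k"
          using ch[of "vs k" "N v / 2 ^ Suc k"] Suc Nv by simp
        then show ?case unfolding vsS using Suc by (auto intro: diff_in)
      qed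
      have chX: "ch (vs k) (N v / 2 ^ Suc k) \<in> X" and chL: "N (L (ch (vs k) (N v / 2 ^ Suc k))) \<le> K * N (vs k)" for k
        using ch[of "vs k" "N v / 2 ^ Suc k"] vsX[of k] Nv by auto
      define s where "s k = L (vs k)" for k
      have sX: "s k \<in> X" for k using lin_in[OF L] vsX by (simp add: s_def)
      have st: "N (\<lambda>z. s (Suc k) z - s k z) \<le> (K * N v) * (1/2) ^ k" for k
      proof -
        have "(\<lambda>z. s (Suc k) z - s k z) = (\<lambda>z. - L (ch (vs k) (N v / 2 ^ Suc k)) z)"
          using lin_diff[OF L, of "vs k" "ch (vs k) (N v / 2 ^ Suc k)"] vsX chX by (simp add: s_def vsS)
        then have "N (\<lambda>z. s (Suc k) z - s k z) = N (L (ch (vs k) (N v / 2 ^ Suc k)))"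
          using N_neg lin_in[OF L chX] by simp
        also have "\<dots> \<le> K * N (vs k)" by (rule chL)
        also have "\<dots> \<le> K * (N v / 2 ^ k)" using vsX K0 by (intro mult_left_mono) auto
        finally show ?thesis by (simp add: power_one_over)
      qed
      obtain w where w: "w \<in> X" "(\<lambda>k. N (\<lambda>z. s k z - w z)) \<longlonglongrightarrow> 0"
        using geom_conv[OF sX _ _ st] by auto
      have vs_lim: "(\<lambda>k. N (vs k)) \<longlonglongrightarrow> 0"
      proof (rule tendsto_sandwich[of "\<lambda>_. 0" _ _ "\<lambda>k. N v * (1/2) ^ k"])
        show "\<forall>\<^sub>F k in sequentially. 0 \<le> N (vs k)" using vsX by (simp add: always_eventually)
        show "\<forall>\<^sub>F k in sequentially. N (vs k) \<le> N v * (1/2) ^ k"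
          using vsX by (simp add: always_eventually power_one_over)
        show "(\<lambda>k. N v * (1/2) ^ k) \<longlonglongrightarrow> 0"
          using tendsto_mult_right_zero[OF LIMSEQ_power_zero[of "1/2::real"]] by simp
      qed simp
      have "w = (\<lambda>z. 0)" using cg[of vs w] vsX w vs_lim by (simp add: s_def)
      then have sl: "(\<lambda>k. N (s k)) \<longlonglongrightarrow> 0" using w by simp
      have bd: "N (L v) \<le> 2 * K * N v + N (s k)" for k
      proof -
        have "N (\<lambda>z. s k z - s 0 z) \<le> (K * N v) * ((1/2) ^ 0 - (1/2) ^ k) / (1 - 1/2)"
          using geom_tele[OF sX _ _ st, of 0 k] by simp
        also have "\<dots> \<le> 2 * K * N v" using K0 Nv by (simp add: field_simps)
        finally have 1: "N (\<lambda>z. s k z - s 0 z) \<le> 2 * K * N v" .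
        have "N (\<lambda>z. s 0 z - s k z) \<le> N (\<lambda>z. s 0 z - s k z)" by simp
        have "N (s 0) = N (\<lambda>z. s k z - (\<lambda>z. s k z - s 0 z) z)" by simp
        also have "\<dots> \<le> N (s k) + N (\<lambda>z. s k z - s 0 z)"
          using N_diff_le sX diff_in by blast
        finally show ?thesis using 1 by (simp add: s_def vs0)
      qed
      have "(\<lambda>k. 2 * K * N v + N (s k)) \<longlonglongrightarrow> 2 * K * N v + 0"
        by (intro tendsto_intros sl)
      then show "N (L v) \<le> (2 * K) * N v"
        using bd by (intro tendsto_lowerbound) (auto intro: always_eventually)
    qed
  qed
qed

end

context bsp begin

lemma inverse_op:
  assumes A: "lin A" and Abd: "\<And>f. f \<in> X \<Longrightarrow> N (A f) \<le> CA * N f"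
    and surj: "\<And>g. g \<in> X \<Longrightarrow> \<exists>h\<in>X. A h = g"
    and inj: "\<And>h. h \<in> X \<Longrightarrow> A h = (\<lambda>z. 0) \<Longrightarrow> h = (\<lambda>z. 0)"
  shows "\<exists>S. bounded_op X N S \<and> (\<forall>f\<in>X. S (A f) = f) \<and> (\<forall>f\<in>X. A (S f) = f)"
proof -
  have uniq: "h1 = h2" if "h1 \<in> X" "h2 \<in> X" "A h1 = A h2" for h1 h2
  proof -
    have "A (\<lambda>z. h1 z - h2 z) = (\<lambda>z. 0)" using lin_diff[OF A that(1,2)] that(3) by simp
    then have "(\<lambda>z. h1 z - h2 z) = (\<lambda>z. 0)" using inj that by (simp add: diff_in)
    then show ?thesis by (simp add: fun_eq_iff)
  qed
  define U where "U g = (SOME h. h \<in> X \<and> A h = g)" for g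
  have U: "U g \<in> X \<and> A (U g) = g" if "g \<in> X" for g
  proof -
    have ex: "\<exists>h. h \<in> X \<and> A h = g" using surj[OF that] by blast
    show ?thesis unfolding U_def by (rule someI_ex[OF ex])
  qed
  have UA: "U (A f) = f" if "f \<in> X" for f
  proof -
    have "U (A f) \<in> X" "A (U (A f)) = A f" using U[of "A f"] lin_in[OF A that] by auto
    then show ?thesis using uniq that by blast
  qed
  have Ulin: "lin U"
    unfolding lin_def
  proof (intro conjI ballI allI)
    fix f assume "f \<in> X" then show "U f \<in> X" using U by simp
  next
    fix f g assume fg: "f \<in> X" "g \<in> X"
    have Uf: "U f \<in> X" "A (U f) = f" and Ug: "U g \<in> X" "A (U g) = g" using U fg by auto
    have Ufg: "U (\<lambda>z. f z + g z) \<in> X" "A (U (\<lambda>z. f z + g z)) = (\<lambda>z. f z + g z)"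
      using U[of "\<lambda>z. f z + g z"] fg by (auto intro: add_in)
    have "A (\<lambda>z. U f z + U g z) = (\<lambda>z. A (U f) z + A (U g) z)"
      by (rule lin_add[OF A Uf(1) Ug(1)])
    also have "\<dots> = (\<lambda>z. f z + g z)" using Uf Ug by simp
    finally have "A (\<lambda>z. U f z + U g z) = A (U (\<lambda>z. f z + g z))"
      using Ufg by simp
    then show "U (\<lambda>z. f z + g z) = (\<lambda>z. U f z + U g z)"
      using uniq[OF Ufg(1) add_in[OF Uf(1) Ug(1)]] by simp
  next
    fix f c assume f: "f \<in> X"
    have Uf: "U f \<in> X" "A (U f) = f" using U f by auto
    have Ufc: "U (\<lambda>z. c * f z) \<in> X" "A (U (\<lambda>z. c * f z)) = (\<lambda>z. c * f z)"
      using U[of "\<lambda>z. c * f z"] f by (auto intro: smult_in)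
    have "A (\<lambda>z. c * U f z) = (\<lambda>z. c * A (U f) z)"
      by (rule lin_smult[OF A Uf(1)])
    also have "\<dots> = (\<lambda>z. c * f z)" using Uf by simp
    finally have "A (\<lambda>z. c * U f z) = A (U (\<lambda>z. c * f z))"
      using Ufc by simp
    then show "U (\<lambda>z. c * f z) = (\<lambda>z. c * U f z)"
      using uniq[OF Ufc(1) smult_in[OF Uf(1)]] by simp
  qed
  have "\<exists>C. \<forall>f\<in>X. N (U f) \<le> C * N f"
  proof (rule closed_graph[OF Ulin])
    fix s w assume s: "\<And>n. s n \<in> X" and w: "w \<in> X" and s0: "(\<lambda>n. N (s n)) \<longlonglongrightarrow> 0"
      and sw: "(\<lambda>n. N (\<lambda>z. U (s n) z - w z)) \<longlonglongrightarrow> 0"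
    have Us: "U (s n) \<in> X" "A (U (s n)) = s n" for n using U s by auto
    have bd: "N (A w) \<le> CA * N (\<lambda>z. U (s n) z - w z) + N (s n)" for n
    proof -
      have "N (A w) = N (\<lambda>z. s n z - (\<lambda>z. A (U (s n)) z - A w z) z)"
        using Us(2)[of n] by simp
      also have "\<dots> \<le> N (s n) + N (\<lambda>z. A (U (s n)) z - A w z)"
        by (rule N_diff_le[OF s diff_in[OF lin_in[OF A Us(1)] lin_in[OF A w]]])
      also have "N (\<lambda>z. A (U (s n)) z - A w z) = N (A (\<lambda>z. U (s n) z - w z))"
        using lin_diff[OF A Us(1) w] by simp
      also have "\<dots> \<le> CA * N (\<lambda>z. U (s n) z - w z)"
        by (rule Abd[OF diff_in[OF Us(1) w]])
      finally show ?thesis by simp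
    qed
    have "(\<lambda>n. CA * N (\<lambda>z. U (s n) z - w z) + N (s n)) \<longlonglongrightarrow> CA * 0 + 0"
      by (intro tendsto_intros sw s0)
    then have "N (A w) \<le> 0"
      using bd by (intro tendsto_lowerbound) (auto intro: always_eventually)
    then have "N (A w) = 0" using N_nonneg[OF lin_in[OF A w]] by linarith
    then have "A w = (\<lambda>z. 0)" using N_eq_0 lin_in[OF A w] by blast
    then show "w = (\<lambda>z. 0)" using inj w by blast
  qed
  then have "bounded_op X N U"
    using Ulin unfolding bounded_op_def lin_def by (elim conjE) (intro conjI)
  moreover have "\<forall>f\<in>X. U (A f) = f" using UA by simp
  moreover have "\<forall>f\<in>X. A (U f) = f" using U by simp
  ultimately show ?thesis by (intro exI[of _ U]) simp
qed

end

lemma zmul_Hol: "f \<in> Hol_D \<Longrightarrow> (\<lambda>z. z * f z) \<in> Hol_D"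
  unfolding Hol_D_def by (auto intro!: holomorphic_intros)

lemma Hol_cont0: "f \<in> Hol_D \<Longrightarrow> isCont f 0"
proof -
  assume "f \<in> Hol_D"
  then have "continuous_on (ball 0 1) f"
    unfolding Hol_D_def by (auto intro: holomorphic_on_imp_continuous_on)
  then show "isCont f 0" by (simp add: continuous_on_interior)
qed

lemma zcancel:
  assumes "f1 \<in> Hol_D" "f2 \<in> Hol_D" "\<And>z. z * f1 z = z * f2 z"
  shows "f1 = f2"
proof -
  have ne: "f1 z = f2 z" if "z \<noteq> 0" for z using assms(3)[of z] that by simp
  have "f1 \<midarrow>0\<rightarrow> f1 0" using Hol_cont0[OF assms(1)] by (simp add: isCont_def)
  moreover have "f1 \<midarrow>0\<rightarrow> f2 0"
  proof -
    have "f2 \<midarrow>0\<rightarrow> f2 0" using Hol_cont0[OF assms(2)] by (simp add: isCont_def)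
    then show ?thesis
      by (rule Lim_transform_eventually) (auto simp: eventually_at_filter ne)
  qed
  ultimately have "f1 0 = f2 0" using LIM_unique by blast
  show ?thesis
  proof (rule ext)
    fix z show "f1 z = f2 z" using ne \<open>f1 0 = f2 0\<close> by (cases "z = 0") auto
  qed
qed

lemma zdiv:
  assumes "y \<in> Hol_D" "y 0 = 0"
  shows "\<exists>h\<in>Hol_D. \<forall>z. y z = z * h z"
proof -
  have hy: "y holomorphic_on ball 0 1" and out: "\<And>z. z \<notin> ball 0 1 \<Longrightarrow> y z = 0"
    using assms(1) unfolding Hol_D_def by auto
  define g where "g = (\<lambda>z. if z = 0 then deriv y 0 else (y z - y 0) / (z - 0))"
  have g: "g holomorphic_on ball 0 1"
    unfolding g_def by (rule pole_lemma[OF hy]) simp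
  define h where "h z = (if z \<in> ball 0 1 then g z else 0)" for z
  have "h holomorphic_on ball 0 1"
    by (rule holomorphic_transform[OF g]) (simp add: h_def)
  then have "h \<in> Hol_D" unfolding Hol_D_def by (auto simp: h_def)
  moreover have "y z = z * h z" for z
  proof (cases "z \<in> ball 0 1")
    case True then show ?thesis using assms(2) by (auto simp: h_def g_def)
  next
    case False then show ?thesis using out by (simp add: h_def)
  qed
  ultimately show ?thesis by blast
qed

locale setting = bsp X N for X N +
  fixes m :: "complex \<Rightarrow> complex" and \<beta> :: complex
    and T :: "(complex \<Rightarrow> complex) \<Rightarrow> (complex \<Rightarrow> complex)"
  assumes i: "e0 \<in> X"
    and ii: "\<forall>f\<in>Hol_D. \<forall>f1\<in>Hol_D. (\<forall>z. f z = z * f1 z) \<longrightarrow> (f \<in> X \<longleftrightarrow> f1 \<in> X)"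
    and mX: "\<forall>f\<in>X. (\<lambda>z. m z * f z) \<in> X"
    and \<beta>1: "cmod \<beta> = 1" and \<beta>2: "\<forall>n::nat. n \<ge> 1 \<longrightarrow> \<beta> ^ n \<noteq> 1"
    and T_def: "\<forall>f. T f = (\<lambda>z. m z * f (\<beta> * z))"
    and T_bdd: "bounded_op X N T"
begin

lemma T_lin: "lin T" using T_bdd unfolding bounded_op_def lin_def by (elim conjE) (intro conjI)

lemma T_bound: "\<exists>C. \<forall>f\<in>X. N (T f) \<le> C * N f" using T_bdd unfolding bounded_op_def by (elim conjE)

definition A :: "complex \<Rightarrow> (complex \<Rightarrow> complex) \<Rightarrow> (complex \<Rightarrow> complex)" where
  "A l f = (\<lambda>z. l * f z - T f z)"

lemma A_lin: "lin (A l)"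
  unfolding lin_def
proof (intro conjI ballI allI)
  fix f assume f: "f \<in> X"
  show "A l f \<in> X" unfolding A_def by (rule diff_in[OF smult_in[OF f] lin_in[OF T_lin f]])
next
  fix f g assume "f \<in> X" "g \<in> X"
  then show "A l (\<lambda>z. f z + g z) = (\<lambda>z. A l f z + A l g z)"
    unfolding A_def using lin_add[OF T_lin] by (simp add: algebra_simps)
next
  fix f c assume "f \<in> X"
  then show "A l (\<lambda>z. c * f z) = (\<lambda>z. c * A l f z)"
    unfolding A_def using lin_smult[OF T_lin] by (simp add: algebra_simps)
qed

lemma A_bound: "\<exists>C. \<forall>f\<in>X. N (A l f) \<le> C * N f"
proof -
  obtain C where C: "\<forall>f\<in>X. N (T f) \<le> C * N f" using T_bound by blast
  have "N (A l f) \<le> (cmod l + C) * N f" if f: "f \<in> X" for f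
  proof -
    have "N (A l f) \<le> N (\<lambda>z. l * f z) + N (T f)"
      unfolding A_def by (rule N_diff_le[OF smult_in[OF f] lin_in[OF T_lin f]])
    also have "\<dots> \<le> cmod l * N f + C * N f" using N_smult[OF f] C f by simp
    finally show ?thesis by (simp add: algebra_simps)
  qed
  then show ?thesis by blast
qed

lemma A0: "A l (\<lambda>z. 0) = (\<lambda>z. 0)" by (rule lin_zero[OF A_lin])

lemma notin_spec_iff: "l \<notin> op_spectrum X N T \<longleftrightarrow>
   (\<exists>S. bounded_op X N S \<and> (\<forall>f\<in>X. S (A l f) = f) \<and> (\<forall>f\<in>X. A l (S f) = f))"
  unfolding op_spectrum_def A_def by simp

lemma notin_spec_I:
  assumes surj: "\<And>g. g \<in> X \<Longrightarrow> \<exists>h\<in>X. A l h = g"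
    and inj: "\<And>h. h \<in> X \<Longrightarrow> A l h = (\<lambda>z. 0) \<Longrightarrow> h = (\<lambda>z. 0)"
  shows "l \<notin> op_spectrum X N T"
proof -
  obtain C where C: "\<forall>f\<in>X. N (A l f) \<le> C * N f" using A_bound by blast
  show ?thesis unfolding notin_spec_iff
    by (rule inverse_op[OF A_lin _ surj inj]) (use C in auto)
qed

lemma zX_iff: "f \<in> Hol_D \<Longrightarrow> (\<lambda>z. z * f z) \<in> X \<longleftrightarrow> f \<in> X"
proof -
  assume f: "f \<in> Hol_D"
  have "\<forall>f1\<in>Hol_D. (\<forall>z. z * f z = z * f1 z) \<longrightarrow> ((\<lambda>z. z * f z) \<in> X \<longleftrightarrow> f1 \<in> X)"
    using ii zmul_Hol[OF f] by (rule bspec)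
  then show ?thesis using f by simp
qed

lemma zX: "f \<in> X \<Longrightarrow> (\<lambda>z. z * f z) \<in> X"
  using zX_iff XD by blast

lemma e0_0: "e0 0 = 1" by (simp add: e0_def)

lemma spec_m0: "m 0 \<in> op_spectrum X N T"
proof (rule ccontr)
  assume "m 0 \<notin> op_spectrum X N T"
  then obtain S where S: "bounded_op X N S" "\<forall>f\<in>X. A (m 0) (S f) = f"
    unfolding notin_spec_iff by blast
  then have "A (m 0) (S e0) 0 = e0 0" using i by simp
  moreover have "A (m 0) (S e0) 0 = 0" unfolding A_def using T_def by simp
  ultimately show False using e0_0 by simp
qed

end

context setting begin

lemma beta_nz: "\<beta> \<noteq> 0" using \<beta>1 by auto

lemma A_z: "A \<nu> (\<lambda>z. z * h z) = (\<lambda>z. \<beta> * z * A (\<nu> / \<beta>) h z)"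
  unfolding A_def using T_def beta_nz by (auto simp: fun_eq_iff field_simps)

lemma get_inv:
  assumes "\<nu> \<notin> op_spectrum X N T"
  obtains R C where "lin R" "\<And>f. f \<in> X \<Longrightarrow> R (A \<nu> f) = f" "\<And>f. f \<in> X \<Longrightarrow> A \<nu> (R f) = f"
    "\<And>f. f \<in> X \<Longrightarrow> N (R f) \<le> C * N f" "C > 0"
proof -
  obtain R where R: "bounded_op X N R" "\<forall>f\<in>X. R (A \<nu> f) = f" "\<forall>f\<in>X. A \<nu> (R f) = f"
    using assms unfolding notin_spec_iff by blast
  have Rl: "lin R" using R(1) unfolding bounded_op_def lin_def by (elim conjE) (intro conjI)
  obtain C where C: "\<forall>f\<in>X. N (R f) \<le> C * N f" using R(1) unfolding bounded_op_def by (elim conjE exE) blast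
  have "N (R f) \<le> (\<bar>C\<bar> + 1) * N f" if "f \<in> X" for f
  proof -
    have "N (R f) \<le> C * N f" using C that by blast
    also have "\<dots> \<le> (\<bar>C\<bar> + 1) * N f" using N_nonneg[OF that] by (intro mult_right_mono) auto
    finally show ?thesis .
  qed
  then show ?thesis using that[OF Rl, of "\<bar>C\<bar> + 1"] R by auto
qed


lemma rot_step:
  assumes nu: "\<nu> \<notin> op_spectrum X N T" and nm: "\<nu> \<noteq> m 0"
  shows "\<nu> / \<beta> \<notin> op_spectrum X N T"
proof -
  obtain R C where Rl: "lin R" and RA: "\<And>f. f \<in> X \<Longrightarrow> R (A \<nu> f) = f"
    and AR: "\<And>f. f \<in> X \<Longrightarrow> A \<nu> (R f) = f"
    using get_inv[OF nu] by metis
  show ?thesis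
  proof (rule notin_spec_I)
    fix h assume h: "h \<in> X" and Ah: "A (\<nu> / \<beta>) h = (\<lambda>z. 0)"
    have zh: "(\<lambda>z. z * h z) \<in> X" using zX[OF h] .
    have "A \<nu> (\<lambda>z. z * h z) = (\<lambda>z. 0)" using A_z[of \<nu> h] Ah by simp
    then have "(\<lambda>z. z * h z) = R (\<lambda>z. 0)" using RA[OF zh] by simp
    also have "\<dots> = R (A \<nu> (\<lambda>z. 0))" using A0 by simp
    also have "\<dots> = (\<lambda>z. 0)" using RA zero_in by blast
    finally have "\<And>z. z * h z = z * 0" by (simp add: fun_eq_iff)
    moreover have "(\<lambda>z. 0) \<in> Hol_D" using XD zero_in by blast
    ultimately show "h = (\<lambda>z. 0)" using zcancel[of h "\<lambda>z. 0"] h XD by blast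
  next
    fix g assume g: "g \<in> X"
    define g' where "g' = (\<lambda>z. \<beta> * (z * g z))"
    have g': "g' \<in> X" unfolding g'_def by (rule smult_in[OF zX[OF g]])
    define y where "y = R g'"
    have y: "y \<in> X" "A \<nu> y = g'" using lin_in[OF Rl g'] AR[OF g'] by (auto simp: y_def)
    have "A \<nu> y 0 = 0" using y(2) by (simp add: g'_def)
    then have "(\<nu> - m 0) * y 0 = 0" unfolding A_def using T_def by (simp add: algebra_simps)
    then have y0: "y 0 = 0" using nm by simp
    have yH: "y \<in> Hol_D" using y(1) XD by blast
    obtain h where h: "h \<in> Hol_D" "\<And>z. y z = z * h z" using zdiv[OF yH y0] by blast
    have yh: "y = (\<lambda>z. z * h z)" using h by (simp add: fun_eq_iff)
    have hX: "h \<in> X" using zX_iff[OF h(1)] y(1) yh by simp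
    have Ah: "A (\<nu> / \<beta>) h \<in> X" using lin_in[OF A_lin hX] .
    have eqg: "(\<lambda>z. \<beta> * z * A (\<nu> / \<beta>) h z) = g'" using A_z[of \<nu> h] y(2) yh by simp
    have eq: "z * (\<beta> * A (\<nu> / \<beta>) h z) = z * (\<beta> * g z)" for z
      using fun_cong[OF eqg, of z] unfolding g'_def by (simp add: algebra_simps)
    have "(\<lambda>z. \<beta> * A (\<nu> / \<beta>) h z) = (\<lambda>z. \<beta> * g z)"
      by (rule zcancel) (use eq XD smult_in[OF Ah] smult_in[OF g] in auto)
    then have "A (\<nu> / \<beta>) h = g" using beta_nz by (simp add: fun_eq_iff)
    then show "\<exists>h\<in>X. A (\<nu> / \<beta>) h = g" using hX by blast
  qed
qed

lemma open_resolvent: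
  assumes nu: "\<nu> \<notin> op_spectrum X N T"
  shows "\<exists>\<delta>>0. \<forall>\<nu>'. cmod (\<nu>' - \<nu>) < \<delta> \<longrightarrow> \<nu>' \<notin> op_spectrum X N T"
proof -
  obtain R C where Rl: "lin R" and RA: "\<And>f. f \<in> X \<Longrightarrow> R (A \<nu> f) = f"
    and AR: "\<And>f. f \<in> X \<Longrightarrow> A \<nu> (R f) = f"
    and RC: "\<And>f. f \<in> X \<Longrightarrow> N (R f) \<le> C * N f" and C: "C > 0"
    using get_inv[OF nu] by metis
  show ?thesis
  proof (intro exI conjI allI impI)
    show "1 / (2 * C) > 0" using C by simp
    fix \<nu>' assume d: "cmod (\<nu>' - \<nu>) < 1 / (2 * C)"
    define a where "a = \<nu> - \<nu>'"
    have aC: "cmod a * C \<le> 1/2"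
      using d C by (simp add: a_def norm_minus_commute field_simps)
    have Aa: "A \<nu> h = (\<lambda>z. A \<nu>' h z + a * h z)" for h
      unfolding A_def a_def by (simp add: fun_eq_iff algebra_simps)
    have Ra: "N (R (\<lambda>z. a * h z)) \<le> 1/2 * N h" if h: "h \<in> X" for h
    proof -
      have "N (R (\<lambda>z. a * h z)) = cmod a * N (R h)"
        using lin_smult[OF Rl h] N_smult[OF lin_in[OF Rl h]] by simp
      also have "\<dots> \<le> cmod a * (C * N h)" using RC[OF h] by (intro mult_left_mono) auto
      also have "\<dots> = (cmod a * C) * N h" by simp
      also have "\<dots> \<le> 1/2 * N h" using aC N_nonneg[OF h] by (intro mult_right_mono) auto
      finally show ?thesis .
    qed
    show "\<nu>' \<notin> op_spectrum X N T"
    proof (rule notin_spec_I)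
      fix h assume h: "h \<in> X" and Ah: "A \<nu>' h = (\<lambda>z. 0)"
      have "A \<nu> h = (\<lambda>z. a * h z)" using Aa[of h] Ah by simp
      then have "h = R (\<lambda>z. a * h z)" using RA[OF h] by simp
      then have "N h \<le> 1/2 * N h" using Ra[OF h] by simp
      then have "N h = 0" using N_nonneg[OF h] by linarith
      then show "h = (\<lambda>z. 0)" using N_eq_0 h by blast
    next
      fix g assume g: "g \<in> X"
      define \<Phi> where "\<Phi> h = R (\<lambda>z. g z + a * h z)" for h
      have \<Phi>X: "h \<in> X \<Longrightarrow> \<Phi> h \<in> X" for h
        unfolding \<Phi>_def by (rule lin_in[OF Rl add_in[OF g smult_in]])
      have \<Phi>c: "N (\<lambda>z. \<Phi> h1 z - \<Phi> h2 z) \<le> 1/2 * N (\<lambda>z. h1 z - h2 z)"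
        if h12: "h1 \<in> X" "h2 \<in> X" for h1 h2
      proof -
        have "(\<lambda>z. \<Phi> h1 z - \<Phi> h2 z) = R (\<lambda>z. (g z + a * h1 z) - (g z + a * h2 z))"
          unfolding \<Phi>_def
          by (rule lin_diff[OF Rl add_in[OF g smult_in[OF h12(1)]] add_in[OF g smult_in[OF h12(2)]], symmetric])
        also have "(\<lambda>z. (g z + a * h1 z) - (g z + a * h2 z)) = (\<lambda>z. a * (h1 z - h2 z))"
          by (simp add: fun_eq_iff algebra_simps)
        finally show ?thesis using Ra[OF diff_in[OF h12]] by simp
      qed
      define hs where "hs k = (\<Phi> ^^ k) (\<lambda>z. 0)" for k
      have hsX: "hs k \<in> X" for k by (induction k) (auto simp: hs_def \<Phi>X)
      have hsS: "hs (Suc k) = \<Phi> (hs k)" for k by (simp add: hs_def)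
      have st: "N (\<lambda>z. hs (Suc k) z - hs k z) \<le> N (\<lambda>z. hs 1 z - hs 0 z) * (1/2) ^ k" for k
      proof (induction k)
        case 0 then show ?case by simp
      next
        case (Suc k)
        have "N (\<lambda>z. hs (Suc (Suc k)) z - hs (Suc k) z) \<le> 1/2 * N (\<lambda>z. hs (Suc k) z - hs k z)"
          unfolding hsS[of "Suc k"] unfolding hsS[of k] using \<Phi>c[OF \<Phi>X[OF hsX[of k]] hsX[of k]]
          by (simp add: hsS)
        also have "\<dots> \<le> 1/2 * (N (\<lambda>z. hs 1 z - hs 0 z) * (1/2) ^ k)" using Suc by simp
        finally show ?case by (simp add: field_simps)
      qed
      obtain h where h: "h \<in> X" "(\<lambda>k. N (\<lambda>z. hs k z - h z)) \<longlonglongrightarrow> 0"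
        using geom_conv[OF hsX _ _ st] by auto
      have l1: "(\<lambda>k. N (\<lambda>z. hs (Suc k) z - h z)) \<longlonglongrightarrow> 0"
        using LIMSEQ_Suc[OF h(2)] .
      have l2: "(\<lambda>k. N (\<lambda>z. hs (Suc k) z - \<Phi> h z)) \<longlonglongrightarrow> 0"
      proof (rule tendsto_sandwich[of "\<lambda>_. 0" _ _ "\<lambda>k. 1/2 * N (\<lambda>z. hs k z - h z)"])
        show "\<forall>\<^sub>F k in sequentially. 0 \<le> N (\<lambda>z. hs (Suc k) z - \<Phi> h z)"
          using hsX \<Phi>X[OF h(1)] by (intro always_eventually) (simp add: diff_in)
        show "\<forall>\<^sub>F k in sequentially. N (\<lambda>z. hs (Suc k) z - \<Phi> h z) \<le> 1/2 * N (\<lambda>z. hs k z - h z)"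
          using \<Phi>c[OF hsX h(1)] by (intro always_eventually) (simp add: hsS)
        have "(\<lambda>k. 1/2 * N (\<lambda>z. hs k z - h z)) \<longlonglongrightarrow> 1/2 * 0"
          by (intro tendsto_intros h(2))
        then show "(\<lambda>k. 1/2 * N (\<lambda>z. hs k z - h z)) \<longlonglongrightarrow> 0" by simp
      qed simp
      have fixpt: "\<Phi> h = h"
        using lim_unique[OF hsX \<Phi>X[OF h(1)] h(1) l2 l1] .
      have "A \<nu> h = (\<lambda>z. g z + a * h z)"
        using AR[OF add_in[OF g smult_in[OF h(1), of a]]] fixpt unfolding \<Phi>_def by simp
      then have "A \<nu>' h = g" using Aa[of h] by (simp add: fun_eq_iff)
      then show "\<exists>h\<in>X. A \<nu>' h = g" using h(1) by blast
    qed
  qed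
qed

end

context setting begin

lemma fwd: "l \<in> op_spectrum X N T \<Longrightarrow> \<beta> * l \<in> op_spectrum X N T"
proof (rule ccontr)
  assume l: "l \<in> op_spectrum X N T" and nl: "\<beta> * l \<notin> op_spectrum X N T"
  have "\<beta> * l \<noteq> m 0" using nl spec_m0 by auto
  then have "\<beta> * l / \<beta> \<notin> op_spectrum X N T" using rot_step[OF nl] by blast
  then show False using l beta_nz by simp
qed

lemma fwd_pow: "l \<in> op_spectrum X N T \<Longrightarrow> \<beta> ^ n * l \<in> op_spectrum X N T"
proof (induction n)
  case 0 then show ?case by simp
next
  case (Suc n)
  then have "\<beta> * (\<beta> ^ n * l) \<in> op_spectrum X N T" using fwd by blast
  then show ?case by (simp add: mult.assoc)
qed

lemma rot: assumes l: "l \<in> op_spectrum X N T" and mu: "cmod \<mu> = 1"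
  shows "l * \<mu> \<in> op_spectrum X N T"
proof (rule ccontr)
  assume nl: "l * \<mu> \<notin> op_spectrum X N T"
  then have l0: "l \<noteq> 0" using l by auto
  obtain \<delta> where d: "\<delta> > 0" "\<And>\<nu>'. cmod (\<nu>' - l * \<mu>) < \<delta> \<Longrightarrow> \<nu>' \<notin> op_spectrum X N T"
    using open_resolvent[OF nl] by blast
  obtain n :: nat where n: "cmod (\<beta> ^ n - \<mu>) < \<delta> / cmod l"
    using orbit_dense[OF \<beta>1 \<beta>2 mu, of "\<delta> / cmod l"] d(1) l0 by auto
  have "cmod (\<beta> ^ n * l - l * \<mu>) = cmod l * cmod (\<beta> ^ n - \<mu>)"
    by (simp add: norm_mult[symmetric] algebra_simps)
  also have "\<dots> < cmod l * (\<delta> / cmod l)" using n l0 by (intro mult_strict_left_mono) auto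
  also have "\<dots> = \<delta>" using l0 by simp
  finally show False using d(2) fwd_pow[OF l] by blast
qed

end

theorem proposition5p2:
  fixes X :: "(complex \<Rightarrow> complex) set" and N :: "(complex \<Rightarrow> complex) \<Rightarrow> real"
    and m :: "complex \<Rightarrow> complex" and \<beta> :: complex
    and T :: "(complex \<Rightarrow> complex) \<Rightarrow> (complex \<Rightarrow> complex)"
  assumes X: "banach_subspace_Hol X N"
    and i: "e0 \<in> X"
    and ii: "\<forall>f\<in>Hol_D. \<forall>f1\<in>Hol_D. (\<forall>z. f z = z * f1 z) \<longrightarrow> (f \<in> X \<longleftrightarrow> f1 \<in> X)"
    and iii: "\<forall>f\<in>X. \<forall>\<beta>'. cmod \<beta>' = 1 \<longrightarrow> (\<lambda>z. f (\<beta>' * z)) \<in> X"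
    and m: "m holomorphic_on ball 0 1"
    and mX: "\<forall>f\<in>X. (\<lambda>z. m z * f z) \<in> X"
    and \<beta>: "cmod \<beta> = 1" "\<forall>n::nat. n \<ge> 1 \<longrightarrow> \<beta> ^ n \<noteq> 1"
    and T_def: "\<forall>f. T f = (\<lambda>z. m z * f (\<beta> * z))"
    and T_bdd: "bounded_op X N T"
  shows "(\<forall>\<mu>. cmod \<mu> = 1 \<longrightarrow> m 0 * \<mu> \<in> op_spectrum X N T) \<and>
         (\<forall>l\<in>op_spectrum X N T. \<forall>\<mu>. cmod \<mu> = 1 \<longrightarrow> l * \<mu> \<in> op_spectrum X N T)"
proof -
  interpret S: setting X N m \<beta> T
    by (unfold_locales) (use X i ii mX \<beta> T_def T_bdd in auto)
  show ?thesis using S.rot S.spec_m0 by blast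
qed

end
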